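(* The category $\boxplus$ is a generalized Reedy category with $\boxplus^-$ the wide subcategory of surjective $\boxplus$-morphisms, $\boxplus^+$ the wide subcategory of injective $\boxplus$-morphisms, and $\deg([1]^n)=n$ for $n=0,1,2,\dots$.
   Context: $[1]=\{0<1\}$, $[1]^n$ the product poset ($[1]^0=[0]$). An interval in a poset is a non-empty subset $[x,z]=\{y:x\leq y\leq z\}$. $\boxplus$ is the category whose objects are the $[1]^n$ ($n\geq0$) and whose morphisms are the monotone functions mapping every interval onto an interval. A generalized Reedy category is a small category $\mathcal{S}$ with wide subcategories $\mathcal{S}^-,\mathcal{S}^+$ and a function $\deg$ from objects to $\mathbb{N}$ such that: (i) $\mathcal{S}^-\cap\mathcal{S}^+$ is the core (groupoid of isomorphisms) of $\mathcal{S}$; (ii) for each $\mathcal{S}^-$-morphism $o_1\to o_2$, $\deg(o_1)\geq\deg(o_2)$; (iii) for each $\mathcal{S}^+$-morphism $o_1\to o_2$, $\deg(o_1)\leq\deg(o_2)$; (iv) a morphism $o_1\to o_2$ in $\mathcal{S}^-$ or $\mathcal{S}^+$ lies in both if $\deg(o_1)=\deg(o_2)$; (v) for each $\mathcal{S}^-$-morphism $\zeta$, an isomorphism $\gamma$ with $\gamma\zeta=\zeta$ is an identity; (vi) every $\mathcal{S}$-morphism factors as an $\mathcal{S}^-$-morphism followed by an $\mathcal{S}^+$-morphism, uniquely up to isomorphism. *)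

theory Defs
  imports Main "HOL-Library.FuncSet"
begin

text \<open>A small category is given by a set of objects Ob, hom-sets Hom a b,
  composition cmp a b c g f (meaning g after f, for f : a -> b, g : b -> c),
  and identities idm a.\<close>

definition is_category ::
  "'o set \<Rightarrow> ('o \<Rightarrow> 'o \<Rightarrow> 'm set) \<Rightarrow> ('o \<Rightarrow> 'o \<Rightarrow> 'o \<Rightarrow> 'm \<Rightarrow> 'm \<Rightarrow> 'm) \<Rightarrow> ('o \<Rightarrow> 'm) \<Rightarrow> bool" where
  "is_category Ob Hom cmp idm \<longleftrightarrow>
     (\<forall>a\<in>Ob. idm a \<in> Hom a a) \<and>
     (\<forall>a\<in>Ob. \<forall>b\<in>Ob. \<forall>c\<in>Ob. \<forall>f\<in>Hom a b. \<forall>g\<in>Hom b c. cmp a b c g f \<in> Hom a c) \<and>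
     (\<forall>a\<in>Ob. \<forall>b\<in>Ob. \<forall>f\<in>Hom a b. cmp a a b f (idm a) = f \<and> cmp a b b (idm b) f = f) \<and>
     (\<forall>a\<in>Ob. \<forall>b\<in>Ob. \<forall>c\<in>Ob. \<forall>d\<in>Ob. \<forall>f\<in>Hom a b. \<forall>g\<in>Hom b c. \<forall>h\<in>Hom c d.
        cmp a c d h (cmp a b c g f) = cmp a b d (cmp b c d h g) f)"

definition is_iso ::
  "('o \<Rightarrow> 'o \<Rightarrow> 'm set) \<Rightarrow> ('o \<Rightarrow> 'o \<Rightarrow> 'o \<Rightarrow> 'm \<Rightarrow> 'm \<Rightarrow> 'm) \<Rightarrow> ('o \<Rightarrow> 'm) \<Rightarrow> 'o \<Rightarrow> 'o \<Rightarrow> 'm \<Rightarrow> bool" where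
  "is_iso Hom cmp idm a b f \<longleftrightarrow> f \<in> Hom a b \<and>
     (\<exists>g\<in>Hom b a. cmp a b a g f = idm a \<and> cmp b a b f g = idm b)"

definition wide_subcat ::
  "'o set \<Rightarrow> ('o \<Rightarrow> 'o \<Rightarrow> 'm set) \<Rightarrow> ('o \<Rightarrow> 'o \<Rightarrow> 'o \<Rightarrow> 'm \<Rightarrow> 'm \<Rightarrow> 'm) \<Rightarrow> ('o \<Rightarrow> 'm)
    \<Rightarrow> ('o \<Rightarrow> 'o \<Rightarrow> 'm \<Rightarrow> bool) \<Rightarrow> bool" where
  "wide_subcat Ob Hom cmp idm S \<longleftrightarrow>
     (\<forall>a b f. S a b f \<longrightarrow> a \<in> Ob \<and> b \<in> Ob \<and> f \<in> Hom a b) \<and>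
     (\<forall>a\<in>Ob. S a a (idm a)) \<and>
     (\<forall>a b c f g. S a b f \<longrightarrow> S b c g \<longrightarrow> S a c (cmp a b c g f))"

definition gen_reedy ::
  "'o set \<Rightarrow> ('o \<Rightarrow> 'o \<Rightarrow> 'm set) \<Rightarrow> ('o \<Rightarrow> 'o \<Rightarrow> 'o \<Rightarrow> 'm \<Rightarrow> 'm \<Rightarrow> 'm) \<Rightarrow> ('o \<Rightarrow> 'm)
    \<Rightarrow> ('o \<Rightarrow> 'o \<Rightarrow> 'm \<Rightarrow> bool) \<Rightarrow> ('o \<Rightarrow> 'o \<Rightarrow> 'm \<Rightarrow> bool) \<Rightarrow> ('o \<Rightarrow> nat) \<Rightarrow> bool" where
  "gen_reedy Ob Hom cmp idm Mn Pl deg \<longleftrightarrow>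
     is_category Ob Hom cmp idm \<and>
     wide_subcat Ob Hom cmp idm Mn \<and> wide_subcat Ob Hom cmp idm Pl \<and>
     \<comment> \<open>(i)\<close>
     (\<forall>a\<in>Ob. \<forall>b\<in>Ob. \<forall>f. (Mn a b f \<and> Pl a b f) \<longleftrightarrow> is_iso Hom cmp idm a b f) \<and>
     \<comment> \<open>(ii)\<close>
     (\<forall>a b f. Mn a b f \<longrightarrow> deg b \<le> deg a) \<and>
     \<comment> \<open>(iii)\<close>
     (\<forall>a b f. Pl a b f \<longrightarrow> deg a \<le> deg b) \<and>
     \<comment> \<open>(iv)\<close>
     (\<forall>a b f. (Mn a b f \<or> Pl a b f) \<longrightarrow> deg a = deg b \<longrightarrow> (Mn a b f \<and> Pl a b f)) \<and>
     \<comment> \<open>(v)\<close>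
     (\<forall>a b z g. Mn a b z \<longrightarrow> is_iso Hom cmp idm b b g \<longrightarrow> cmp a b b g z = z \<longrightarrow> g = idm b) \<and>
     \<comment> \<open>(vi) existence\<close>
     (\<forall>a\<in>Ob. \<forall>c\<in>Ob. \<forall>f\<in>Hom a c. \<exists>b\<in>Ob. \<exists>p i. Mn a b p \<and> Pl b c i \<and> cmp a b c i p = f) \<and>
     \<comment> \<open>(vi) uniqueness up to isomorphism\<close>
     (\<forall>a c b b' p i p' i'. Mn a b p \<longrightarrow> Pl b c i \<longrightarrow> Mn a b' p' \<longrightarrow> Pl b' c i' \<longrightarrow>
        cmp a b c i p = cmp a b' c i' p' \<longrightarrow>
        (\<exists>\<theta>. is_iso Hom cmp idm b b' \<theta> \<and> cmp a b b' \<theta> p = p' \<and> cmp b b' c i' \<theta> = i))"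

text \<open>The poset [1]^n: bool lists of length n, ordered componentwise (False < True).\<close>
definition cube :: "nat \<Rightarrow> bool list set" where
  "cube n = {xs. length xs = n}"

definition cleq :: "bool list \<Rightarrow> bool list \<Rightarrow> bool" where
  "cleq xs ys \<longleftrightarrow> list_all2 (\<le>) xs ys"

definition cinterval :: "nat \<Rightarrow> bool list \<Rightarrow> bool list \<Rightarrow> bool list set" where
  "cinterval n x z = {y \<in> cube n. cleq x y \<and> cleq y z}"

definition is_interval :: "nat \<Rightarrow> bool list set \<Rightarrow> bool" where
  "is_interval n S \<longleftrightarrow> (\<exists>x\<in>cube n. \<exists>z\<in>cube n. cleq x z \<and> S = cinterval n x z)"

text \<open>Morphisms [1]^n -> [1]^m: monotone maps sending every interval onto an interval,
  represented extensionally (undefined outside cube n).\<close>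
definition box_hom :: "nat \<Rightarrow> nat \<Rightarrow> (bool list \<Rightarrow> bool list) set" where
  "box_hom n m = {f \<in> cube n \<rightarrow>\<^sub>E cube m.
     (\<forall>x\<in>cube n. \<forall>y\<in>cube n. cleq x y \<longrightarrow> cleq (f x) (f y)) \<and>
     (\<forall>S. is_interval n S \<longrightarrow> is_interval m (f ` S))}"

definition box_comp :: "nat \<Rightarrow> nat \<Rightarrow> nat \<Rightarrow> (bool list \<Rightarrow> bool list) \<Rightarrow> (bool list \<Rightarrow> bool list) \<Rightarrow> (bool list \<Rightarrow> bool list)" where
  "box_comp a b c g f = compose (cube a) g f"

definition box_id :: "nat \<Rightarrow> (bool list \<Rightarrow> bool list)" where
  "box_id a = restrict (\<lambda>x. x) (cube a)"

definition box_surj :: "nat \<Rightarrow> nat \<Rightarrow> (bool list \<Rightarrow> bool list) \<Rightarrow> bool" where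
  "box_surj a b f \<longleftrightarrow> f \<in> box_hom a b \<and> f ` cube a = cube b"

definition box_inj :: "nat \<Rightarrow> nat \<Rightarrow> (bool list \<Rightarrow> bool list) \<Rightarrow> bool" where
  "box_inj a b f \<longleftrightarrow> f \<in> box_hom a b \<and> inj_on f (cube a)"

end

theory Submission
  imports Defs
begin

lemma cleq_nth: "cleq x y \<longleftrightarrow> length x = length y \<and> (\<forall>i<length x. x!i \<le> y!i)"
  unfolding cleq_def by (simp add: list_all2_conv_all_nth)

lemma cleq_refl[simp]: "cleq x x"
  by (simp add: cleq_nth)

lemma cleq_trans: "cleq x y \<Longrightarrow> cleq y z \<Longrightarrow> cleq x z"
  by (auto simp: cleq_nth)

lemma cleq_antisym: "cleq x y \<Longrightarrow> cleq y x \<Longrightarrow> x = y"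
  by (auto simp: cleq_nth intro: nth_equalityI)

lemma cleq_Cons[simp]: "cleq (a#x) (b#y) \<longleftrightarrow> a \<le> b \<and> cleq x y"
  by (simp add: cleq_def)

lemma cleq_Nil1[simp]: "cleq [] y \<longleftrightarrow> y = []"
  by (simp add: cleq_def)

lemma cleq_Nil2[simp]: "cleq x [] \<longleftrightarrow> x = []"
  by (simp add: cleq_def)

lemma cleq_len: "cleq x y \<Longrightarrow> length x = length y"
  by (simp add: cleq_nth)

lemma cube_finite: "finite (cube n)"
proof -
  have "cube n = {xs. set xs \<subseteq> UNIV \<and> length xs = n}" by (auto simp: cube_def)
  then show ?thesis using finite_lists_length_eq[of "UNIV::bool set"] by simp
qed

lemma cube_card: "card (cube n) = 2 ^ n"
proof -
  have "cube n = {xs. set xs \<subseteq> UNIV \<and> length xs = n}" by (auto simp: cube_def)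
  then show ?thesis using card_lists_length_eq[of "UNIV::bool set"] by simp
qed

lemma cinterval_sub: "cinterval n x z \<subseteq> cube n"
  by (auto simp: cinterval_def)

lemma cube_interval: "cube n = cinterval n (replicate n False) (replicate n True)"
  by (auto simp: cinterval_def cube_def cleq_nth)

lemma box_homD:
  assumes "f \<in> box_hom n m"
  shows "f \<in> cube n \<rightarrow> cube m" "f \<in> extensional (cube n)"
    "\<And>x y. x \<in> cube n \<Longrightarrow> y \<in> cube n \<Longrightarrow> cleq x y \<Longrightarrow> cleq (f x) (f y)"
    "\<And>S. is_interval n S \<Longrightarrow> is_interval m (f ` S)"
  using assms by (auto simp: box_hom_def PiE_iff)

lemma is_interval_cinterval: "x \<in> cube n \<Longrightarrow> z \<in> cube n \<Longrightarrow> cleq x z \<Longrightarrow> is_interval n (cinterval n x z)"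
  by (auto simp: is_interval_def)

lemma box_hom_interval:
  assumes f: "f \<in> box_hom n m" and p: "p \<in> cube n" and q: "q \<in> cube n" and pq: "cleq p q"
  shows "f ` cinterval n p q = cinterval m (f p) (f q)"
proof -
  obtain u v where u: "u \<in> cube m" and v: "v \<in> cube m" and uv: "cleq u v"
    and eq: "f ` cinterval n p q = cinterval m u v"
    using box_homD(4)[OF f is_interval_cinterval[OF p q pq]] unfolding is_interval_def by blast
  have pin: "p \<in> cinterval n p q" and qin: "q \<in> cinterval n p q" using p q pq by (auto simp: cinterval_def)
  have mono: "\<And>w. w \<in> cinterval n p q \<Longrightarrow> cleq (f p) (f w) \<and> cleq (f w) (f q)"
    using box_homD(3)[OF f] p q by (auto simp: cinterval_def)
  have "u \<in> f ` cinterval n p q" using eq u uv by (auto simp: cinterval_def)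
  then obtain w where w: "w \<in> cinterval n p q" "u = f w" by blast
  have "f p \<in> cinterval m u v" using eq pin by blast
  then have "cleq u (f p)" by (simp add: cinterval_def)
  with mono[OF w(1)] w(2) have u_eq: "u = f p" using cleq_antisym by blast
  have "v \<in> f ` cinterval n p q" using eq v uv by (auto simp: cinterval_def)
  then obtain w' where w': "w' \<in> cinterval n p q" "v = f w'" by blast
  have "f q \<in> cinterval m u v" using eq qin by blast
  then have "cleq (f q) v" by (simp add: cinterval_def)
  with mono[OF w'(1)] w'(2) have v_eq: "v = f q" using cleq_antisym by blast
  show ?thesis using eq u_eq v_eq by simp
qed

definition cjoin :: "bool list \<Rightarrow> bool list \<Rightarrow> bool list" where
  "cjoin x y = map2 (\<or>) x y"

lemma cjoin_props:
  assumes "x \<in> cube n" "y \<in> cube n"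
  shows "cjoin x y \<in> cube n" "cleq x (cjoin x y)" "cleq y (cjoin x y)"
  using assms by (auto simp: cjoin_def cube_def cleq_nth)

lemma box_inj_reflect:
  assumes f: "f \<in> box_hom n m" and inj: "inj_on f (cube n)"
    and x: "x \<in> cube n" and y: "y \<in> cube n" and le: "cleq (f x) (f y)"
  shows "cleq x y"
proof -
  let ?j = "cjoin x y"
  have j: "?j \<in> cube n" "cleq x ?j" "cleq y ?j" using cjoin_props[OF x y] by auto
  have "f y \<in> cinterval m (f x) (f ?j)"
    using le box_homD(1,3)[OF f] y j x by (auto simp: cinterval_def)
  also have "\<dots> = f ` cinterval n x ?j" using box_hom_interval[OF f x j(1) j(2)] by simp
  finally obtain w where w: "w \<in> cinterval n x ?j" "f y = f w" by blast
  then have "w = y" using inj y cinterval_sub by (metis inj_on_def subsetD)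
  then show ?thesis using w by (simp add: cinterval_def)
qed

lemma box_hom_of_order_bij:
  assumes e: "g \<in> extensional (cube n)" and b: "bij_betw g (cube n) (cube m)"
    and mono: "\<And>x y. x \<in> cube n \<Longrightarrow> y \<in> cube n \<Longrightarrow> cleq x y \<Longrightarrow> cleq (g x) (g y)"
    and refl: "\<And>x y. x \<in> cube n \<Longrightarrow> y \<in> cube n \<Longrightarrow> cleq (g x) (g y) \<Longrightarrow> cleq x y"
  shows "g \<in> box_hom n m"
proof -
  have fs: "g \<in> cube n \<rightarrow>\<^sub>E cube m" using e b by (auto simp: bij_betw_def PiE_def)
  have "is_interval m (g ` S)" if SI: "is_interval n S" for S
  proof -
    obtain s t where st: "s \<in> cube n" "t \<in> cube n" "cleq s t" "S = cinterval n s t"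
      using SI unfolding is_interval_def by blast
    have "g ` cinterval n s t = cinterval m (g s) (g t)"
    proof
      show "g ` cinterval n s t \<subseteq> cinterval m (g s) (g t)"
        using mono st b by (auto simp: cinterval_def bij_betw_def)
      show "cinterval m (g s) (g t) \<subseteq> g ` cinterval n s t"
      proof
        fix y assume y: "y \<in> cinterval m (g s) (g t)"
        then have "y \<in> cube m" by (simp add: cinterval_def)
        then obtain w where w: "w \<in> cube n" "y = g w" using b by (auto simp: bij_betw_def)
        then show "y \<in> g ` cinterval n s t" using y refl st by (auto simp: cinterval_def)
      qed
    qed
    moreover have "g s \<in> cube m" "g t \<in> cube m" using st b by (auto simp: bij_betw_def)
    ultimately show ?thesis using st mono unfolding is_interval_def by blast
  qed
  then show ?thesis using fs mono by (auto simp: box_hom_def)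
qed

fun nd :: "bool list \<Rightarrow> bool list \<Rightarrow> nat" where
  "nd (a#x) (b#z) = (if a = b then nd x z else Suc (nd x z))"
| "nd _ _ = 0"

fun fill :: "bool list \<Rightarrow> bool list \<Rightarrow> bool list \<Rightarrow> bool list" where
  "fill (a#x) (b#z) ws = (if a = b then a # fill x z ws else hd ws # fill x z (tl ws))"
| "fill _ _ ws = []"

fun sel :: "bool list \<Rightarrow> bool list \<Rightarrow> bool list \<Rightarrow> bool list" where
  "sel (a#x) (b#z) (c#u) = (if a = b then sel x z u else c # sel x z u)"
| "sel _ _ _ = []"

lemma F1: "length x = length z \<Longrightarrow> length ws = nd x z \<Longrightarrow> length (fill x z ws) = length x"
proof (induction x arbitrary: z ws)
  case Nil then show ?case by simp
next
  case (Cons a x) then show ?case by (cases z; cases ws) (auto split: if_splits)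
qed

lemma F2: "length y = length x \<Longrightarrow> length x = length z \<Longrightarrow> length (sel x z y) = nd x z"
proof (induction x arbitrary: z y)
  case Nil then show ?case by simp
next
  case (Cons a x) then show ?case by (cases z; cases y) auto
qed

lemma F3: "length x = length z \<Longrightarrow> length ws = nd x z \<Longrightarrow> sel x z (fill x z ws) = ws"
proof (induction x arbitrary: z ws)
  case Nil then show ?case by (cases z) auto
next
  case (Cons a x) then show ?case by (cases z; cases ws) (auto split: if_splits)
qed

lemma F4: "cleq x y \<Longrightarrow> cleq y z \<Longrightarrow> fill x z (sel x z y) = y"
proof (induction x arbitrary: z y)
  case Nil then show ?case by simp
next
  case (Cons a x) then show ?case by (cases z; cases y) auto
qed

lemma F5: "cleq x z \<Longrightarrow> length ws = nd x z \<Longrightarrow> cleq x (fill x z ws) \<and> cleq (fill x z ws) z"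
proof (induction x arbitrary: z ws)
  case Nil then show ?case by simp
next
  case (Cons a x) then show ?case by (cases z; cases ws) (auto split: if_splits)
qed

lemma F6: "length x = length z \<Longrightarrow> cleq ws ws' \<Longrightarrow> length ws = nd x z \<Longrightarrow> cleq (fill x z ws) (fill x z ws')"
proof (induction x arbitrary: z ws ws')
  case Nil then show ?case by simp
next
  case (Cons a x) then show ?case by (cases z; cases ws; cases ws') auto
qed

lemma F7: "length x = length z \<Longrightarrow> cleq u v \<Longrightarrow> length u = length x \<Longrightarrow> cleq (sel x z u) (sel x z v)"
proof (induction x arbitrary: z u v)
  case Nil then show ?case by simp
next
  case (Cons a x) then show ?case by (cases z; cases u; cases v) auto
qed

lemma F8: "cleq x u \<Longrightarrow> cleq u v \<Longrightarrow> cleq v z \<Longrightarrow> cleq (sel x z u) w \<Longrightarrow> cleq w (sel x z v)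
  \<Longrightarrow> cleq u (fill x z w) \<and> cleq (fill x z w) v"
proof (induction x arbitrary: z u v w)
  case Nil then show ?case by simp
next
  case (Cons a x) then show ?case by (cases z; cases u; cases v; cases w) auto
qed

lemma box_id_hom: "box_id a \<in> box_hom a a"
  unfolding box_id_def
proof (rule box_hom_of_order_bij)
  show "bij_betw (restrict (\<lambda>x. x) (cube a)) (cube a) (cube a)"
    unfolding bij_betw_restrict_eq by (rule bij_betw_id[unfolded id_def])
qed auto

lemma box_comp_hom:
  assumes f: "f \<in> box_hom a b" and g: "g \<in> box_hom b c"
  shows "box_comp a b c g f \<in> box_hom a c"
proof -
  note F = box_homD[OF f] and G = box_homD[OF g]
  have "compose (cube a) g f \<in> cube a \<rightarrow>\<^sub>E cube c"
    using F(1) G(1) by (auto simp: compose_def PiE_iff)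
  moreover have "\<forall>x\<in>cube a. \<forall>y\<in>cube a. cleq x y \<longrightarrow> cleq (compose (cube a) g f x) (compose (cube a) g f y)"
  proof (intro ballI impI)
    fix x y assume "x \<in> cube a" "y \<in> cube a" "cleq x y"
    moreover then have "f x \<in> cube b" "f y \<in> cube b" using F(1) by auto
    ultimately show "cleq (compose (cube a) g f x) (compose (cube a) g f y)"
      using F(3) G(3) by (simp add: compose_def)
  qed
  moreover have "is_interval c (compose (cube a) g f ` S)" if SI: "is_interval a S" for S
  proof -
    have "S \<subseteq> cube a" using SI cinterval_sub unfolding is_interval_def by blast
    then have "compose (cube a) g f ` S = g ` (f ` S)" by (auto simp: compose_def)
    then show ?thesis using F(4)[OF SI] G(4) by simp
  qed
  ultimately show ?thesis unfolding box_comp_def box_hom_def by blast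
qed

lemma box_is_category: "is_category (UNIV::nat set) box_hom box_comp box_id"
proof -
  have 1: "box_comp a a b f (box_id a) = f \<and> box_comp a b b (box_id b) f = f" if f: "f \<in> box_hom a b" for a b f
  proof
    note F = box_homD[OF f]
    have "compose (cube a) f (box_id a) = restrict f (cube a)"
      unfolding compose_def box_id_def by (rule restrict_ext) simp
    also have "\<dots> = f" using F(2) by (rule extensional_restrict)
    finally show "box_comp a a b f (box_id a) = f" unfolding box_comp_def .
    have "compose (cube a) (box_id b) f = restrict f (cube a)"
      unfolding compose_def box_id_def
    proof (rule restrict_ext)
      fix x assume "x \<in> cube a"
      then have "f x \<in> cube b" using F(1) by blast
      then show "restrict (\<lambda>x. x) (cube b) (f x) = f x" by simp
    qed
    also have "\<dots> = f" using F(2) by (rule extensional_restrict)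
    finally show "box_comp a b b (box_id b) f = f" unfolding box_comp_def .
  qed
  have 2: "box_comp a c d h (box_comp a b c g f) = box_comp a b d (box_comp b c d h g) f"
    if "f \<in> box_hom a b" "g \<in> box_hom b c" "h \<in> box_hom c d" for a b c d f g h
    using box_homD(1)[OF that(1)] box_homD(1)[OF that(2)] unfolding box_comp_def
    by (simp add: compose_assoc)
  show ?thesis unfolding is_category_def using box_id_hom box_comp_hom 1 2 by blast
qed

lemma box_bij_iso:
  assumes f: "f \<in> box_hom a b" and bij: "bij_betw f (cube a) (cube b)"
  shows "is_iso box_hom box_comp box_id a b f"
proof -
  note F = box_homD[OF f]
  define g where "g = restrict (inv_into (cube a) f) (cube b)"
  have gb: "bij_betw g (cube b) (cube a)"
    unfolding g_def bij_betw_restrict_eq by (rule bij_betw_inv_into[OF bij])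
  have fg: "\<And>y. y \<in> cube b \<Longrightarrow> f (g y) = y" unfolding g_def using bij
    by (simp add: bij_betw_inv_into_right)
  have gf: "g (f x) = x" if x: "x \<in> cube a" for x
  proof -
    have "f x \<in> cube b" using bij_betwE[OF bij] x by blast
    then show ?thesis unfolding g_def using bij_betw_inv_into_left[OF bij x] by simp
  qed
  have gin: "\<And>y. y \<in> cube b \<Longrightarrow> g y \<in> cube a" using bij_betwE[OF gb] by blast
  have injf: "inj_on f (cube a)" using bij unfolding bij_betw_def by blast
  have ghom: "g \<in> box_hom b a"
  proof (rule box_hom_of_order_bij)
    show "g \<in> extensional (cube b)" unfolding g_def by simp
    show "bij_betw g (cube b) (cube a)" by (rule gb)
    show "cleq (g x) (g y)" if "x \<in> cube b" "y \<in> cube b" "cleq x y" for x y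
      using box_inj_reflect[OF f injf gin gin] that fg by simp
    show "cleq x y" if "x \<in> cube b" "y \<in> cube b" "cleq (g x) (g y)" for x y
    proof -
      have "cleq (f (g x)) (f (g y))" using F(3)[OF gin gin] that by blast
      then show ?thesis using that fg by simp
    qed
  qed
  have "box_comp a b a g f = box_id a"
    unfolding box_comp_def box_id_def compose_def by (rule restrict_ext) (simp add: gf)
  moreover have "box_comp b a b f g = box_id b"
    unfolding box_comp_def box_id_def compose_def by (rule restrict_ext) (simp add: fg)
  ultimately show ?thesis unfolding is_iso_def using f ghom by blast
qed

lemma box_iso_D:
  assumes "is_iso box_hom box_comp box_id a b f"
  shows "box_surj a b f \<and> box_inj a b f"
proof -
  obtain g where f: "f \<in> box_hom a b" and g: "g \<in> box_hom b a"
    and gf: "compose (cube a) g f = box_id a" and fg: "compose (cube b) f g = box_id b"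
    using assms unfolding is_iso_def box_comp_def by blast
  have gf': "\<And>x. x \<in> cube a \<Longrightarrow> g (f x) = x"
    using gf unfolding box_id_def by (metis compose_eq restrict_apply')
  have fg': "\<And>x. x \<in> cube b \<Longrightarrow> f (g x) = x"
    using fg unfolding box_id_def by (metis compose_eq restrict_apply')
  have "inj_on f (cube a)" using gf' by (metis inj_on_inverseI)
  moreover have "f ` cube a = cube b"
  proof
    show "f ` cube a \<subseteq> cube b" using box_homD(1)[OF f] by blast
    show "cube b \<subseteq> f ` cube a"
    proof
      fix y assume y: "y \<in> cube b"
      then have "g y \<in> cube a" using box_homD(1)[OF g] by blast
      then show "y \<in> f ` cube a" using fg' y by (metis imageI)
    qed
  qed
  ultimately show ?thesis using f by (simp add: box_surj_def box_inj_def)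
qed


lemma mk_box_hom:
  assumes fs: "f \<in> cube n \<rightarrow>\<^sub>E cube m"
    and mono: "\<And>x y. x \<in> cube n \<Longrightarrow> y \<in> cube n \<Longrightarrow> cleq x y \<Longrightarrow> cleq (f x) (f y)"
    and iv: "\<And>s t. s \<in> cube n \<Longrightarrow> t \<in> cube n \<Longrightarrow> cleq s t \<Longrightarrow> f ` cinterval n s t = cinterval m (f s) (f t)"
  shows "f \<in> box_hom n m"
proof -
  have "is_interval m (f ` S)" if SI: "is_interval n S" for S
  proof -
    obtain s t where st: "s \<in> cube n" "t \<in> cube n" "cleq s t" "S = cinterval n s t"
      using SI unfolding is_interval_def by blast
    have "f s \<in> cube m" "f t \<in> cube m" using fs st by (auto simp: PiE_iff)
    moreover have "cleq (f s) (f t)" using mono st by blast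
    ultimately show ?thesis using iv[OF st(1-3)] st(4) unfolding is_interval_def by blast
  qed
  then show ?thesis using fs mono unfolding box_hom_def by blast
qed

lemma box_factor:
  assumes f: "f \<in> box_hom a c"
  shows "\<exists>b p i. box_surj a b p \<and> box_inj b c i \<and> box_comp a b c i p = f"
proof -
  note F = box_homD[OF f]
  define r0 where "r0 = replicate a False"
  define r1 where "r1 = replicate a True"
  have r: "r0 \<in> cube a" "r1 \<in> cube a" "cleq r0 r1" unfolding r0_def r1_def
    by (auto simp: cube_def cleq_nth)
  define x where "x = f r0"
  define z where "z = f r1"
  have img: "f ` cube a = cinterval c x z"
    unfolding x_def z_def cube_interval[of a] r0_def[symmetric] r1_def[symmetric]
    using box_hom_interval[OF f r] .
  have xc: "x \<in> cube c" and zc: "z \<in> cube c" unfolding x_def z_def using F(1) r by auto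
  have xz: "cleq x z" unfolding x_def z_def using F(3) r by blast
  have lxz: "length x = length z" using xz by (rule cleq_len)
  have lx: "length x = c" using xc by (simp add: cube_def)
  define k where "k = nd x z"
  have fill_in: "fill x z w \<in> cinterval c x z" if "w \<in> cube k" for w
    using F1[OF lxz, of w] F5[OF xz, of w] that lx unfolding cinterval_def cube_def k_def by auto
  have sel_in: "sel x z y \<in> cube k" if "y \<in> cube c" for y
    using F2[of y x z] that lx lxz unfolding cube_def k_def by auto
  have fs: "fill x z (sel x z y) = y" if "y \<in> cinterval c x z" for y
    using F4 that unfolding cinterval_def by blast
  have sf: "sel x z (fill x z w) = w" if "w \<in> cube k" for w
    using F3[OF lxz] that unfolding cube_def k_def by blast
  define i where "i = restrict (fill x z) (cube k)"
  define p where "p = restrict (\<lambda>v. sel x z (f v)) (cube a)"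
  have ihom: "i \<in> box_hom k c"
  proof (rule mk_box_hom)
    have "fill x z w \<in> cube c" if "w \<in> cube k" for w using fill_in[OF that] cinterval_sub by blast
    then show "i \<in> cube k \<rightarrow>\<^sub>E cube c" unfolding i_def by auto
    show mono: "cleq (i w1) (i w2)" if "w1 \<in> cube k" "w2 \<in> cube k" "cleq w1 w2" for w1 w2
      using F6[OF lxz] that unfolding i_def cube_def k_def by auto
    show "i ` cinterval k s t = cinterval c (i s) (i t)" if st: "s \<in> cube k" "t \<in> cube k" "cleq s t" for s t
    proof
      show "i ` cinterval k s t \<subseteq> cinterval c (i s) (i t)"
      proof
        fix y assume "y \<in> i ` cinterval k s t"
        then obtain w where w: "w \<in> cube k" "cleq s w" "cleq w t" "y = i w"
          unfolding cinterval_def by blast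
        then show "y \<in> cinterval c (i s) (i t)" using mono st fill_in cinterval_sub
          unfolding cinterval_def i_def by auto
      qed
      show "cinterval c (i s) (i t) \<subseteq> i ` cinterval k s t"
      proof
        fix y assume y: "y \<in> cinterval c (i s) (i t)"
        have is_: "i s = fill x z s" "i t = fill x z t" using st unfolding i_def by auto
        have "cleq x (i s)" "cleq (i t) z" using fill_in st is_ unfolding cinterval_def by auto
        then have yxz: "y \<in> cinterval c x z" using y unfolding cinterval_def using cleq_trans by blast
        have yc: "y \<in> cube c" using y cinterval_sub by blast
        have "cleq (sel x z (i s)) (sel x z y)" "cleq (sel x z y) (sel x z (i t))"
          using F7[OF lxz] y yc fill_in st is_ lx unfolding cinterval_def cube_def by auto
        then have "cleq s (sel x z y)" "cleq (sel x z y) t" using sf st is_ by auto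
        moreover have "y = i (sel x z y)" using fs[OF yxz] sel_in[OF yc] unfolding i_def by simp
        ultimately show "y \<in> i ` cinterval k s t" using sel_in[OF yc] unfolding cinterval_def by blast
      qed
    qed
  qed
  have iinj: "inj_on i (cube k)"
  proof (rule inj_on_inverseI)
    fix w assume "w \<in> cube k" then show "sel x z (i w) = w" unfolding i_def using sf by simp
  qed
  have fxz: "f v \<in> cinterval c x z" if "v \<in> cube a" for v using img that by blast
  have fc: "f v \<in> cube c" if "v \<in> cube a" for v using F(1) that by blast
  have pv: "p v = sel x z (f v)" if "v \<in> cube a" for v unfolding p_def using that by simp
  have pk: "p v \<in> cube k" if "v \<in> cube a" for v using pv[OF that] sel_in[OF fc[OF that]] by simp
  have pmono: "cleq (p v1) (p v2)" if v: "v1 \<in> cube a" "v2 \<in> cube a" "cleq v1 v2" for v1 v2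
  proof -
    have "cleq (f v1) (f v2)" using F(3) v by blast
    moreover have "length (f v1) = length x" using fc[OF v(1)] lx unfolding cube_def by simp
    ultimately have "cleq (sel x z (f v1)) (sel x z (f v2))" using F7[OF lxz] by blast
    then show ?thesis using pv v by simp
  qed
  have phom: "p \<in> box_hom a k"
  proof (rule mk_box_hom)
    show "p \<in> cube a \<rightarrow>\<^sub>E cube k" unfolding PiE_iff Pi_def using pk unfolding p_def by simp
    show "cleq (p v1) (p v2)" if "v1 \<in> cube a" "v2 \<in> cube a" "cleq v1 v2" for v1 v2
      using pmono that by blast
    show "p ` cinterval a s t = cinterval k (p s) (p t)" if st: "s \<in> cube a" "t \<in> cube a" "cleq s t" for s t
    proof
      show "p ` cinterval a s t \<subseteq> cinterval k (p s) (p t)"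
      proof
        fix y assume "y \<in> p ` cinterval a s t"
        then obtain w where w: "w \<in> cube a" "cleq s w" "cleq w t" "y = p w"
          unfolding cinterval_def by blast
        have "cleq (p s) (p w)" "cleq (p w) (p t)" using pmono w st by blast+
        then show "y \<in> cinterval k (p s) (p t)" using pk[OF w(1)] w(4)
          unfolding cinterval_def by blast
      qed
      show "cinterval k (p s) (p t) \<subseteq> p ` cinterval a s t"
      proof
        fix w assume w: "w \<in> cinterval k (p s) (p t)"
        have wk: "w \<in> cube k" using w cinterval_sub by blast
        have w1: "cleq (sel x z (f s)) w" "cleq w (sel x z (f t))" using w pv st unfolding cinterval_def by auto
        have "cleq x (f s)" "cleq (f t) z" using fxz st unfolding cinterval_def by auto
        moreover have "cleq (f s) (f t)" using F(3) st by blast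
        ultimately have "cleq (f s) (fill x z w) \<and> cleq (fill x z w) (f t)"
          using F8[of x "f s" "f t" z w] w1 by blast
        moreover have "fill x z w \<in> cube c" using fill_in[OF wk] cinterval_sub by blast
        ultimately have "fill x z w \<in> cinterval c (f s) (f t)" unfolding cinterval_def by blast
        then have "fill x z w \<in> f ` cinterval a s t" using box_hom_interval[OF f st] by simp
        then obtain v where v: "v \<in> cinterval a s t" "fill x z w = f v" by blast
        have va: "v \<in> cube a" using v(1) cinterval_sub by blast
        have "p v = w" using pv[OF va] v(2) sf[OF wk] by simp
        then show "w \<in> p ` cinterval a s t" using v by blast
      qed
    qed
  qed
  have psurj: "p ` cube a = cube k"
  proof
    show "p ` cube a \<subseteq> cube k" using pk by blast
    show "cube k \<subseteq> p ` cube a"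
    proof
      fix w assume wk: "w \<in> cube k"
      then have "fill x z w \<in> f ` cube a" using fill_in img by blast
      then obtain v where v: "v \<in> cube a" "fill x z w = f v" by blast
      then have "p v = w" using sf[OF wk] pv[OF v(1)] by simp
      then show "w \<in> p ` cube a" using v by blast
    qed
  qed
  have "compose (cube a) i p = restrict f (cube a)"
    unfolding compose_def
  proof (rule restrict_ext)
    fix v assume v: "v \<in> cube a"
    have "p v \<in> cube k" "p v = sel x z (f v)" using pk[OF v] pv[OF v] by auto
    then show "i (p v) = f v" unfolding i_def using fs[OF fxz[OF v]] by simp
  qed
  also have "\<dots> = f" using F(2) by (rule extensional_restrict)
  finally have "box_comp a k c i p = f" unfolding box_comp_def .
  then show ?thesis using phom psurj ihom iinj unfolding box_surj_def box_inj_def by blast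
qed


lemma box_unique:
  assumes p: "box_surj a b p" and i: "box_inj b c i" and p': "box_surj a b' p'" and i': "box_inj b' c i'"
    and eq: "box_comp a b c i p = box_comp a b' c i' p'"
  shows "\<exists>\<theta>. is_iso box_hom box_comp box_id b b' \<theta> \<and> box_comp a b b' \<theta> p = p' \<and> box_comp b b' c i' \<theta> = i"
proof -
  have ph: "p \<in> box_hom a b" and pim: "p ` cube a = cube b" using p unfolding box_surj_def by auto
  have ph': "p' \<in> box_hom a b'" and pim': "p' ` cube a = cube b'" using p' unfolding box_surj_def by auto
  have ih: "i \<in> box_hom b c" and ii: "inj_on i (cube b)" using i unfolding box_inj_def by auto
  have ih': "i' \<in> box_hom b' c" and ii': "inj_on i' (cube b')" using i' unfolding box_inj_def by auto
  have eqv: "i (p v) = i' (p' v)" if v: "v \<in> cube a" for v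
  proof -
    have "compose (cube a) i p v = compose (cube a) i' p' v" using eq unfolding box_comp_def by simp
    then show ?thesis using v by (simp add: compose_eq)
  qed
  have img: "i ` cube b = i' ` cube b'"
  proof -
    have "i ` cube b = (\<lambda>v. i (p v)) ` cube a" using pim by (metis image_image)
    also have "\<dots> = (\<lambda>v. i' (p' v)) ` cube a" using eqv by (rule image_cong[OF refl])
    also have "\<dots> = i' ` cube b'" using pim' by (metis image_image)
    finally show ?thesis .
  qed
  define th where "th = restrict (\<lambda>w. inv_into (cube b') i' (i w)) (cube b)"
  have thin: "th w \<in> cube b'" and thi: "i' (th w) = i w" if w: "w \<in> cube b" for w
  proof -
    have iw: "i w \<in> i' ` cube b'" using img w by blast
    have "th w = inv_into (cube b') i' (i w)" unfolding th_def using w by simp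
    then show "th w \<in> cube b'" "i' (th w) = i w" using iw by (auto intro: inv_into_into f_inv_into_f)
  qed
  have thbij: "bij_betw th (cube b) (cube b')"
  proof (rule bij_betw_imageI)
    show "inj_on th (cube b)"
    proof (rule inj_onI)
      fix u w assume "u \<in> cube b" "w \<in> cube b" "th u = th w"
      then show "u = w" using thi ii by (metis inj_onD)
    qed
    show "th ` cube b = cube b'"
    proof
      show "th ` cube b \<subseteq> cube b'" using thin by blast
      show "cube b' \<subseteq> th ` cube b"
      proof
        fix w' assume w': "w' \<in> cube b'"
        then have "i' w' \<in> i ` cube b" using img by blast
        then obtain w where w: "w \<in> cube b" "i' w' = i w" by blast
        then have "i' (th w) = i' w'" using thi by simp
        then have "th w = w'" using ii' thin[OF w(1)] w' by (metis inj_onD)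
        then show "w' \<in> th ` cube b" using w by blast
      qed
    qed
  qed
  have thhom: "th \<in> box_hom b b'"
  proof (rule box_hom_of_order_bij)
    show "th \<in> extensional (cube b)" unfolding th_def by simp
    show "bij_betw th (cube b) (cube b')" by (rule thbij)
    show "cleq (th u) (th w)" if uw: "u \<in> cube b" "w \<in> cube b" "cleq u w" for u w
    proof -
      have "cleq (i u) (i w)" using box_homD(3)[OF ih] uw by blast
      then have "cleq (i' (th u)) (i' (th w))" using thi uw by simp
      then show ?thesis using box_inj_reflect[OF ih' ii' thin[OF uw(1)] thin[OF uw(2)]] by blast
    qed
    show "cleq u w" if uw: "u \<in> cube b" "w \<in> cube b" "cleq (th u) (th w)" for u w
    proof -
      have "cleq (i' (th u)) (i' (th w))" using box_homD(3)[OF ih'] uw thin by blast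
      then have "cleq (i u) (i w)" using thi uw by simp
      then show ?thesis using box_inj_reflect[OF ih ii uw(1) uw(2)] by blast
    qed
  qed
  have iso: "is_iso box_hom box_comp box_id b b' th" by (rule box_bij_iso[OF thhom thbij])
  have c1: "box_comp a b b' th p = p'"
  proof -
    have "compose (cube a) th p = restrict p' (cube a)"
      unfolding compose_def
    proof (rule restrict_ext)
      fix v assume v: "v \<in> cube a"
      have pv: "p v \<in> cube b" "p' v \<in> cube b'" using v pim pim' by auto
      have "i' (th (p v)) = i' (p' v)" using thi[OF pv(1)] eqv[OF v] by simp
      then show "th (p v) = p' v" using ii' thin[OF pv(1)] pv(2) by (metis inj_onD)
    qed
    also have "\<dots> = p'" using box_homD(2)[OF ph'] by (rule extensional_restrict)
    finally show ?thesis unfolding box_comp_def .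
  qed
  have c2: "box_comp b b' c i' th = i"
  proof -
    have "compose (cube b) i' th = restrict i (cube b)"
      unfolding compose_def by (rule restrict_ext) (simp add: thi)
    also have "\<dots> = i" using box_homD(2)[OF ih] by (rule extensional_restrict)
    finally show ?thesis unfolding box_comp_def .
  qed
  show ?thesis using iso c1 c2 by blast
qed

lemma cube_eq_card:
  assumes "card (cube m) \<le> card (cube n)" shows "m \<le> n"
proof -
  have "(2::nat) ^ m \<le> 2 ^ n" using assms by (simp add: cube_card)
  then show ?thesis by simp
qed

lemma box_id_on: "x \<in> cube a \<Longrightarrow> box_id a x = x"
  unfolding box_id_def by simp

lemma box_id_surj: "box_surj a a (box_id a)"
proof -
  have "box_id a ` cube a = (\<lambda>x. x) ` cube a" by (rule image_cong[OF refl]) (rule box_id_on)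
  then show ?thesis unfolding box_surj_def using box_id_hom[of a] by simp
qed

lemma box_id_inj: "box_inj a a (box_id a)"
proof -
  have "inj_on (box_id a) (cube a)" by (rule inj_onI) (simp add: box_id_on)
  then show ?thesis unfolding box_inj_def using box_id_hom[of a] by simp
qed

lemma comp_eq_on: "x \<in> cube a \<Longrightarrow> box_comp a b c g f x = g (f x)"
  unfolding box_comp_def by (rule compose_eq)

lemma comp_image: "box_comp a b c g f ` cube a = g ` (f ` cube a)"
proof -
  have "box_comp a b c g f ` cube a = (\<lambda>x. g (f x)) ` cube a"
    by (rule image_cong[OF refl]) (rule comp_eq_on)
  also have "\<dots> = g ` (f ` cube a)" by (rule image_image[symmetric])
  finally show ?thesis .
qed

lemma surj_comp:
  assumes f: "box_surj a b f" and g: "box_surj b c g"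
  shows "box_surj a c (box_comp a b c g f)"
proof -
  have fh: "f \<in> box_hom a b" and fi: "f ` cube a = cube b" using f unfolding box_surj_def by auto
  have gh: "g \<in> box_hom b c" and gi: "g ` cube b = cube c" using g unfolding box_surj_def by auto
  have "box_comp a b c g f ` cube a = cube c" unfolding comp_image fi gi ..
  moreover have "box_comp a b c g f \<in> box_hom a c" by (rule box_comp_hom[OF fh gh])
  ultimately show ?thesis unfolding box_surj_def by blast
qed

lemma inj_comp:
  assumes f: "box_inj a b f" and g: "box_inj b c g"
  shows "box_inj a c (box_comp a b c g f)"
proof -
  have fa: "\<And>x. x \<in> cube a \<Longrightarrow> f x \<in> cube b" using f box_homD(1) unfolding box_inj_def by blast
  have fi: "inj_on f (cube a)" and gi: "inj_on g (cube b)" using f g unfolding box_inj_def by blast+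
  have "inj_on (box_comp a b c g f) (cube a)"
  proof (rule inj_onI)
    fix x y assume x: "x \<in> cube a" and y: "y \<in> cube a" and e: "box_comp a b c g f x = box_comp a b c g f y"
    then have "g (f x) = g (f y)" using comp_eq_on[OF x, of b c g f] comp_eq_on[OF y, of b c g f] by simp
    then have "f x = f y" by (rule inj_onD[OF gi _ fa[OF x] fa[OF y]])
    then show "x = y" by (rule inj_onD[OF fi _ x y])
  qed
  moreover have "box_comp a b c g f \<in> box_hom a c"
    using box_comp_hom f g unfolding box_inj_def by blast
  ultimately show ?thesis unfolding box_inj_def by blast
qed

theorem mainTheorem11:
  shows "gen_reedy (UNIV :: nat set) box_hom box_comp box_id box_surj box_inj (\<lambda>n. n)"
proof -
  have ws1: "wide_subcat UNIV box_hom box_comp box_id box_surj"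
    unfolding wide_subcat_def using box_id_surj surj_comp by (auto simp: box_surj_def)
  have ws2: "wide_subcat UNIV box_hom box_comp box_id box_inj"
    unfolding wide_subcat_def using box_id_inj inj_comp by (auto simp: box_inj_def)
  have c1: "(box_surj a b f \<and> box_inj a b f) \<longleftrightarrow> is_iso box_hom box_comp box_id a b f" for a b f
  proof
    assume "box_surj a b f \<and> box_inj a b f"
    then show "is_iso box_hom box_comp box_id a b f"
      using box_bij_iso unfolding box_surj_def box_inj_def bij_betw_def by blast
  qed (rule box_iso_D)
  have c2: "b \<le> a" if "box_surj a b f" for a b f
  proof -
    have "card (cube b) = card (f ` cube a)" using that unfolding box_surj_def by simp
    also have "\<dots> \<le> card (cube a)" using cube_finite by (rule card_image_le)
    finally show ?thesis by (rule cube_eq_card)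
  qed
  have c3: "a \<le> b" if "box_inj a b f" for a b f
  proof -
    have "f ` cube a \<subseteq> cube b" using that box_homD(1) unfolding box_inj_def by blast
    then have "card (cube a) \<le> card (cube b)"
      using that cube_finite card_inj_on_le unfolding box_inj_def by blast
    then show ?thesis by (rule cube_eq_card)
  qed
  have c4: "box_surj a b f \<and> box_inj a b f" if "box_surj a b f \<or> box_inj a b f" "a = b" for a b f
  proof (cases "box_surj a b f")
    case True
    then have "card (f ` cube a) = card (cube a)" using that(2) unfolding box_surj_def by simp
    then have "inj_on f (cube a)" using cube_finite eq_card_imp_inj_on by blast
    then show ?thesis using True unfolding box_inj_def box_surj_def by blast
  next
    case False
    then have bi: "box_inj a b f" using that by blast
    have sub: "f ` cube a \<subseteq> cube b" using bi box_homD(1) unfolding box_inj_def by blast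
    have "card (f ` cube a) = card (cube b)"
      using bi that(2) card_image unfolding box_inj_def by metis
    then have "f ` cube a = cube b" using card_subset_eq[OF cube_finite sub] by blast
    then show ?thesis using bi unfolding box_inj_def box_surj_def by blast
  qed
  have c5: "g = box_id b" if z: "box_surj a b z" and g: "is_iso box_hom box_comp box_id b b g"
    and e: "box_comp a b b g z = z" for a b z g
  proof -
    have gh: "g \<in> box_hom b b" using g unfolding is_iso_def by blast
    show ?thesis
    proof (rule extensionalityI[OF box_homD(2)[OF gh]])
      show "box_id b \<in> extensional (cube b)" unfolding box_id_def by simp
      fix w assume w: "w \<in> cube b"
      then obtain v where v: "v \<in> cube a" "w = z v" using z unfolding box_surj_def by blast
      have "g (z v) = z v" using comp_eq_on[OF v(1), of b b g z] e by simp
      then show "g w = box_id b w" using v w unfolding box_id_def by simp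
    qed
  qed
  have c6: "\<forall>a\<in>UNIV. \<forall>c\<in>UNIV. \<forall>f\<in>box_hom a c. \<exists>b\<in>UNIV. \<exists>p i. box_surj a b p \<and> box_inj b c i \<and> box_comp a b c i p = f"
    using box_factor by blast
  show ?thesis
    unfolding gen_reedy_def
  proof (intro conjI)
    show "is_category UNIV box_hom box_comp box_id" by (rule box_is_category)
    show "wide_subcat UNIV box_hom box_comp box_id box_surj" by (rule ws1)
    show "wide_subcat UNIV box_hom box_comp box_id box_inj" by (rule ws2)
    show "\<forall>a\<in>UNIV. \<forall>b\<in>UNIV. \<forall>f. (box_surj a b f \<and> box_inj a b f) \<longleftrightarrow> is_iso box_hom box_comp box_id a b f"
      using c1 by blast
    show "\<forall>a b f. box_surj a b f \<longrightarrow> b \<le> a" using c2 by blast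
    show "\<forall>a b f. box_inj a b f \<longrightarrow> a \<le> b" using c3 by blast
    show "\<forall>a b f. (box_surj a b f \<or> box_inj a b f) \<longrightarrow> a = b \<longrightarrow> (box_surj a b f \<and> box_inj a b f)"
      using c4 by blast
    show "\<forall>a b z g. box_surj a b z \<longrightarrow> is_iso box_hom box_comp box_id b b g \<longrightarrow> box_comp a b b g z = z \<longrightarrow> g = box_id b"
      using c5 by blast
    show "\<forall>a\<in>UNIV. \<forall>c\<in>UNIV. \<forall>f\<in>box_hom a c. \<exists>b\<in>UNIV. \<exists>p i. box_surj a b p \<and> box_inj b c i \<and> box_comp a b c i p = f"
      by (rule c6)
    show "\<forall>a c b b' p i p' i'. box_surj a b p \<longrightarrow> box_inj b c i \<longrightarrow> box_surj a b' p' \<longrightarrow> box_inj b' c i' \<longrightarrow>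
        box_comp a b c i p = box_comp a b' c i' p' \<longrightarrow>
        (\<exists>\<theta>. is_iso box_hom box_comp box_id b b' \<theta> \<and> box_comp a b b' \<theta> p = p' \<and> box_comp b b' c i' \<theta> = i)"
      using box_unique by blast
  qed
qed

end
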